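(* Let $X$ be a compact Hausdorff space and $f:\mathbb N\to X$ a map with finite range. For $m\ge1$ let $R_m(f)=\{(f(lm),f(lm+1),\ldots,f(lm+m-1)):l\in\mathbb N\}$. Then the limit $\lim_{m\to\infty}\frac{\log|R_m(f)|}{m}$ exists and equals the anqie entropy of $f$.
   Context: $\mathbb N=\{0,1,2,\ldots\}$. For a compact Hausdorff space $X$ and a map $f:\mathbb N\to X$, let $X_f$ be the closure in $X^{\mathbb N}$ (product topology) of $\{(f(n),f(n+1),f(n+2),\ldots):n\in\mathbb N\}$, and let $B_f$ be the shift $(\omega_0,\omega_1,\ldots)\mapsto(\omega_1,\omega_2,\ldots)$ restricted to $X_f$. The anqie entropy of $f$ is the topological entropy $h(B_f)$. $|C|$ is the cardinality of a finite set $C$. *)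

theory Defs
  imports "HOL-Analysis.Analysis"
begin

definition open_covers :: "'a topology \<Rightarrow> 'a set set set" where
  "open_covers T = {U. (\<forall>u\<in>U. openin T u) \<and> \<Union>U = topspace T}"

definition cover_number :: "'a topology \<Rightarrow> 'a set set \<Rightarrow> nat" where
  "cover_number T U = Inf {card W | W. W \<subseteq> U \<and> finite W \<and> \<Union>W = topspace T}"

definition join_cover :: "'a topology \<Rightarrow> ('a \<Rightarrow> 'a) \<Rightarrow> 'a set set \<Rightarrow> nat \<Rightarrow> 'a set set" where
  "join_cover T g U n =
     {topspace T \<inter> (\<Inter>i<n. (g ^^ i) -` c i) | c. \<forall>i<n. c i \<in> U}"

definition entropy_cover :: "'a topology \<Rightarrow> ('a \<Rightarrow> 'a) \<Rightarrow> 'a set set \<Rightarrow> real" where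
  "entropy_cover T g U =
     lim (\<lambda>n. ln (real (cover_number T (join_cover T g U n))) / real n)"

definition top_entropy :: "'a topology \<Rightarrow> ('a \<Rightarrow> 'a) \<Rightarrow> ereal" where
  "top_entropy T g = (SUP U \<in> open_covers T. ereal (entropy_cover T g U))"

definition Xf_top :: "'a topology \<Rightarrow> (nat \<Rightarrow> 'a) \<Rightarrow> (nat \<Rightarrow> 'a) topology" where
  "Xf_top X f = subtopology (product_topology (\<lambda>_. X) UNIV)
     ((product_topology (\<lambda>_. X) UNIV) closure_of {(\<lambda>k. f (n + k)) | n. True})"

definition shift :: "(nat \<Rightarrow> 'a) \<Rightarrow> (nat \<Rightarrow> 'a)" where
  "shift \<omega> = (\<lambda>k. \<omega> (Suc k))"

definition anqie_entropy :: "'a topology \<Rightarrow> (nat \<Rightarrow> 'a) \<Rightarrow> ereal" where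
  "anqie_entropy X f = top_entropy (Xf_top X f) shift"

definition R_blocks :: "(nat \<Rightarrow> 'a) \<Rightarrow> nat \<Rightarrow> 'a list set" where
  "R_blocks f m = {map (\<lambda>i. f (l * m + i)) [0..<m] | l. True}"

end

theory Submission
  imports Defs
begin


lemma fekete:
  fixes a :: "nat \<Rightarrow> real"
  assumes sub: "\<And>m n. a (m+n) \<le> a m + a n" and nn: "\<And>n. 0 \<le> a n"
  shows "(\<lambda>n. a n / real n) \<longlonglongrightarrow> (INF n\<in>{1..}. a n / real n)"
proof -
  define L where "L = (INF n\<in>{1..}. a n / real n)"
  have bdd: "bdd_below ((\<lambda>n. a n / real n) ` {1..})"
    by (rule bdd_belowI[of _ 0]) (auto simp: nn)
  have low: "L \<le> a n / real n" if "n \<ge> 1" for n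
    unfolding L_def using that bdd by (auto intro: cINF_lower)
  have mult: "a (q*k + r) \<le> real q * a k + a r" for q k r
  proof (induction q)
    case 0 show ?case by simp
  next
    case (Suc q)
    have "a (Suc q * k + r) = a (k + (q*k+r))" by (simp add: algebra_simps)
    also have "\<dots> \<le> a k + a (q*k+r)" by (rule sub)
    finally show ?case using Suc by (simp add: algebra_simps)
  qed
  show ?thesis unfolding L_def[symmetric]
  proof (rule order_tendstoI)
    fix y assume "y < L"
    show "eventually (\<lambda>n. y < a n / real n) sequentially"
      using eventually_ge_at_top[of 1] by eventually_elim (use low \<open>y<L\<close> in fastforce)
  next
    fix y assume "L < y"
    then obtain k where k: "k \<ge> 1" "a k / real k < y"
      unfolding L_def using bdd by (auto simp: cINF_less_iff)
    define M where "M = (\<Sum>r<k. a r)"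
    have M: "a r \<le> M" if "r < k" for r
      unfolding M_def using that nn by (intro member_le_sum) auto
    have M0: "M \<ge> 0" unfolding M_def using nn by (simp add: sum_nonneg)
    define d where "d = y - a k / real k"
    have d: "d > 0" using k by (simp add: d_def)
    obtain N :: nat where N: "real N > M / d" using reals_Archimedean2 by blast
    show "eventually (\<lambda>n. a n / real n < y) sequentially"
      using eventually_ge_at_top[of "max 1 N"]
    proof eventually_elim
      case (elim n)
      define q where "q = n div k"
      define r where "r = n mod k"
      have n_eq: "n = q*k + r" unfolding q_def r_def by simp
      have rk: "r < k" unfolding r_def using k by simp
      have "a n \<le> real q * a k + M" using mult[of q k r] M[OF rk] n_eq by simp
      have n1: "real n \<ge> 1" using elim by simp
      have "a n / real n \<le> (real q * a k + M) / real n"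
        using \<open>a n \<le> _\<close> n1 by (simp add: divide_right_mono)
      also have "\<dots> = (real (q*k) / real n) * (a k / real k) + M / real n"
        using k n1 by (simp add: field_simps)
      also have "\<dots> \<le> a k / real k + M / real n"
      proof -
        have "real (q*k) \<le> real n" using n_eq by simp
        hence "real (q*k) / real n \<le> 1" using n1 by simp
        moreover have "a k / real k \<ge> 0" using nn by simp
        ultimately have "(real (q*k) / real n) * (a k / real k) \<le> 1 * (a k / real k)"
          by (intro mult_right_mono) auto
        thus ?thesis by simp
      qed
      also have "\<dots> < a k / real k + d"
      proof -
        have "real n \<ge> real N" using elim by simp
        hence "real n > M / d" using N by simp
        hence "M < d * real n" using d by (simp add: field_simps)
        thus ?thesis using n1 by (simp add: field_simps)
      qed
      also have "\<dots> = y" by (simp add: d_def)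
      finally show ?case .
    qed
  qed
qed



definition fac :: "(nat \<Rightarrow> 'a) \<Rightarrow> nat \<Rightarrow> 'a list set" where
  "fac f n = {map (\<lambda>i. f (p + i)) [0..<n] | p. True}"

lemma fac_finite: assumes "finite (range f)" shows "finite (fac f n)"
proof -
  have "fac f n \<subseteq> {xs. set xs \<subseteq> range f \<and> length xs = n}" unfolding fac_def by auto
  moreover have "finite {xs. set xs \<subseteq> range f \<and> length xs = n}"
    using assms by (rule finite_lists_length_eq)
  ultimately show ?thesis by (rule finite_subset)
qed

lemma fac_ne: "fac f n \<noteq> {}" unfolding fac_def by auto

lemma fac_card_pos: assumes "finite (range f)" shows "card (fac f n) \<ge> 1"
  using fac_finite[OF assms] fac_ne[of f n] by (simp add: Suc_le_eq card_gt_0_iff)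

lemma map_upt_add: "map g [0..<m+n] = map g [0..<m] @ map (\<lambda>i. g (m + i)) [0..<n]"
  by (induction n) auto

lemma fac_sub: assumes "finite (range f)"
  shows "card (fac f (m+n)) \<le> card (fac f m) * card (fac f n)"
proof -
  have "fac f (m+n) \<subseteq> (\<lambda>(x,y). x @ y) ` (fac f m \<times> fac f n)"
  proof
    fix w assume "w \<in> fac f (m+n)"
    then obtain p where w: "w = map (\<lambda>i. f (p + i)) [0..<m+n]" unfolding fac_def by auto
    have "w = map (\<lambda>i. f (p + i)) [0..<m] @ map (\<lambda>i. f ((p + m) + i)) [0..<n]"
      unfolding w map_upt_add by (simp add: add.assoc)
    moreover have "map (\<lambda>i. f (p + i)) [0..<m] \<in> fac f m" unfolding fac_def by blast
    moreover have "map (\<lambda>i. f ((p+m) + i)) [0..<n] \<in> fac f n" unfolding fac_def by blast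
    ultimately show "w \<in> (\<lambda>(x,y). x @ y) ` (fac f m \<times> fac f n)" by force
  qed
  hence "card (fac f (m+n)) \<le> card ((\<lambda>(x,y). x @ y) ` (fac f m \<times> fac f n))"
    by (intro card_mono finite_imageI finite_cartesian_product fac_finite assms)
  also have "\<dots> \<le> card (fac f m \<times> fac f n)" by (rule card_image_le)
    (intro finite_cartesian_product fac_finite assms)
  also have "\<dots> = card (fac f m) * card (fac f n)" by (rule card_cartesian_product)
  finally show ?thesis .
qed

lemma R_sub_fac: "R_blocks f k \<subseteq> fac f k"
  unfolding R_blocks_def fac_def by auto

lemma R_finite: "finite (range f) \<Longrightarrow> finite (R_blocks f k)"
  using R_sub_fac fac_finite finite_subset by metis

lemma R_card_pos: assumes "finite (range f)" shows "card (R_blocks f k) \<ge> 1"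
proof -
  have "R_blocks f k \<noteq> {}" unfolding R_blocks_def by auto
  thus ?thesis using R_finite[OF assms] by (simp add: Suc_le_eq card_gt_0_iff)
qed

lemma concat_blocks:
  "concat (map (\<lambda>j. map (\<lambda>i. g (j*k+i)) [0..<k]) [0..<q]) = map g [0..<q*k]"
proof (induction q)
  case 0 then show ?case by simp
next
  case (Suc q)
  have "map g [0..<Suc q * k] = map g [0..<q*k + k]" by (simp add: algebra_simps)
  also have "\<dots> = map g [0..<q*k] @ map (\<lambda>i. g (q*k + i)) [0..<k]" by (rule map_upt_add)
  finally show ?case using Suc by simp
qed

lemma take_drop_map_upt:
  assumes "n + r \<le> N"
  shows "take n (drop r (map g [0..<N])) = map (\<lambda>i. g (r + i)) [0..<n]"
  using assms
  by (auto simp: drop_map take_map intro!: nth_equalityI)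

lemma fac_R_bound:
  assumes fin: "finite (range f)" and k: "k \<ge> 1"
  shows "card (fac f n) \<le> k * card (R_blocks f k) ^ (n div k + 2)"
proof -
  define q where "q = n div k + 2"
  define Ls where "Ls = {bs. set bs \<subseteq> R_blocks f k \<and> length bs = q}"
  define dec where "dec = (\<lambda>(r::nat, bs::'a list list). take n (drop r (concat bs)))"
  have "fac f n \<subseteq> dec ` ({..<k} \<times> Ls)"
  proof
    fix w assume "w \<in> fac f n"
    then obtain p where w: "w = map (\<lambda>i. f (p + i)) [0..<n]" unfolding fac_def by auto
    define l where "l = p div k"
    define r where "r = p mod k"
    have p: "p = l*k + r" unfolding l_def r_def by simp
    have rk: "r < k" unfolding r_def using k by simp
    define bs where "bs = map (\<lambda>j. map (\<lambda>i. f ((l+j)*k+i)) [0..<k]) [0..<q]"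
    have "bs \<in> Ls" unfolding Ls_def bs_def R_blocks_def by auto
    have "concat bs = map (\<lambda>i. f (l*k + i)) [0..<q*k]"
      unfolding bs_def using concat_blocks[of "\<lambda>i. f (l*k+i)" k q]
      by (simp add: algebra_simps)
    moreover have "n + r \<le> q*k"
    proof -
      have "n < (n div k + 1) * k" using k
        by (metis add.commute div_mult_mod_eq mod_less_divisor mult_Suc
            nat_add_left_cancel_less not_one_le_zero plus_1_eq_Suc zero_less_iff_neq_zero)
      thus ?thesis unfolding q_def using rk by (simp add: algebra_simps)
    qed
    ultimately have "dec (r, bs) = map (\<lambda>i. f (l*k + (r + i))) [0..<n]"
      unfolding dec_def by (simp add: take_drop_map_upt)
    also have "\<dots> = w" unfolding w p by (simp add: add.assoc)
    finally show "w \<in> dec ` ({..<k} \<times> Ls)" using rk \<open>bs \<in> Ls\<close> by force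
  qed
  have finLs: "finite Ls" unfolding Ls_def by (rule finite_lists_length_eq[OF R_finite[OF fin]])
  have "card (fac f n) \<le> card (dec ` ({..<k} \<times> Ls))"
    by (rule card_mono) (use finLs \<open>fac f n \<subseteq> _\<close> in auto)
  also have "\<dots> \<le> card ({..<k} \<times> Ls)" by (rule card_image_le) (use finLs in auto)
  also have "\<dots> = k * card (R_blocks f k) ^ q"
    by (simp add: card_cartesian_product Ls_def card_lists_length_eq R_finite[OF fin])
  finally show ?thesis unfolding q_def .
qed



definition hF :: "(nat \<Rightarrow> 'a) \<Rightarrow> real" where
  "hF f = (INF n\<in>{1..}. ln (real (card (fac f n))) / real n)"

lemma fac_lim: assumes fin: "finite (range f)"
  shows "(\<lambda>n. ln (real (card (fac f n))) / real n) \<longlonglongrightarrow> hF f"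
  unfolding hF_def
proof (rule fekete)
  fix m n
  have "ln (real (card (fac f (m + n)))) \<le> ln (real (card (fac f m) * card (fac f n)))"
    using fac_sub[OF fin, of m n] fac_card_pos[OF fin, of "m+n"] fac_card_pos[OF fin, of m] fac_card_pos[OF fin, of n]
    by (subst ln_le_cancel_iff) (auto simp del: of_nat_mult simp: of_nat_le_iff)
  also have "\<dots> = ln (real (card (fac f m))) + ln (real (card (fac f n)))"
    using fac_card_pos[OF fin, of m] fac_card_pos[OF fin, of n] by (simp add: ln_mult)
  finally show "ln (real (card (fac f (m + n)))) \<le> ln (real (card (fac f m))) + ln (real (card (fac f n)))" .
next
  fix n show "0 \<le> ln (real (card (fac f n)))" using fac_card_pos[OF fin, of n] by simp
qed

lemma h_le_R: assumes fin: "finite (range f)" and k: "k \<ge> 1"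
  shows "hF f \<le> ln (real (card (R_blocks f k))) / real k"
proof -
  define C where "C = ln (real (card (R_blocks f k)))"
  have C0: "C \<ge> 0" unfolding C_def using R_card_pos[OF fin, of k] by simp
  have lim: "(\<lambda>n. C / real k + (ln (real k) + 2 * C) / real n) \<longlonglongrightarrow> C / real k + 0"
    by (intro tendsto_add tendsto_const tendsto_divide_0[OF tendsto_const]
        filterlim_at_top_imp_at_infinity filterlim_real_sequentially)
  show ?thesis unfolding C_def[symmetric]
  proof (rule tendsto_le[OF _ lim[simplified] fac_lim[OF fin]])
    show "\<forall>\<^sub>F n in sequentially. ln (real (card (fac f n))) / real n \<le> C / real k + (ln (real k) + 2 * C) / real n"
      using eventually_ge_at_top[of 1]
    proof eventually_elim
      case (elim n)
      have c1: "card (R_blocks f k) \<ge> 1" using R_card_pos[OF fin] .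
      have "ln (real (card (fac f n))) \<le> ln (real (k * card (R_blocks f k) ^ (n div k + 2)))"
      proof (subst ln_le_cancel_iff)
        show "real (card (fac f n)) \<le> real (k * card (R_blocks f k) ^ (n div k + 2))"
          using fac_R_bound[OF fin k, of n] by (simp only: of_nat_le_iff)
        show "0 < real (card (fac f n))" using fac_card_pos[OF fin, of n] by simp
        show "0 < real (k * card (R_blocks f k) ^ (n div k + 2))" using k c1 by simp
      qed
      also have "\<dots> = ln (real k) + real (n div k + 2) * C"
        using k c1 unfolding C_def by (simp add: ln_mult ln_realpow algebra_simps)
      also have "\<dots> \<le> ln (real k) + (real n / real k + 2) * C"
        using C0 of_nat_div_le_of_nat[of n k] by (intro add_left_mono mult_right_mono) auto
      finally have "ln (real (card (fac f n))) \<le> ln (real k) + (real n / real k + 2) * C" .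
      hence "ln (real (card (fac f n))) / real n \<le> (ln (real k) + (real n / real k + 2) * C) / real n"
        using elim by (simp add: divide_right_mono)
      also have "\<dots> = C / real k + (ln (real k) + 2 * C) / real n"
        using elim k by (simp add: field_simps)
      finally show ?case .
    qed
  qed simp
qed

lemma R_lim: assumes fin: "finite (range f)"
  shows "(\<lambda>m. ln (real (card (R_blocks f m))) / real m) \<longlonglongrightarrow> hF f"
proof (rule tendsto_sandwich[OF _ _ tendsto_const fac_lim[OF fin]])
  show "\<forall>\<^sub>F n in sequentially. hF f \<le> ln (real (card (R_blocks f n))) / real n"
    using eventually_ge_at_top[of 1] by eventually_elim (rule h_le_R[OF fin])
  show "\<forall>\<^sub>F n in sequentially. ln (real (card (R_blocks f n))) / real n \<le> ln (real (card (fac f n))) / real n"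
  proof (rule always_eventually, rule allI)
    fix n
    have "card (R_blocks f n) \<le> card (fac f n)"
      by (rule card_mono[OF fac_finite[OF fin] R_sub_fac])
    thus "ln (real (card (R_blocks f n))) / real n \<le> ln (real (card (fac f n))) / real n"
      using R_card_pos[OF fin, of n] by (intro divide_right_mono) auto
  qed
qed



locale anq =
  fixes X :: "'a topology" and f :: "nat \<Rightarrow> 'a"
  assumes cpt: "compact_space X" and hd: "Hausdorff_space X"
    and rng: "range f \<subseteq> topspace X" and fin: "finite (range f)"
begin

definition Pt :: "(nat \<Rightarrow> 'a) topology" where "Pt = product_topology (\<lambda>_. X) UNIV"
definition Ob :: "(nat \<Rightarrow> 'a) set" where "Ob = {(\<lambda>k. f (n + k)) | n. True}"
definition S :: "(nat \<Rightarrow> 'a) set" where "S = Pt closure_of Ob"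
definition V :: "'a \<Rightarrow> 'a set" where "V b = topspace X - (range f - {b})"

lemma T_eq: "Xf_top X f = subtopology Pt S"
  unfolding Xf_top_def Pt_def S_def Ob_def by simp

lemma topPt: "\<omega> \<in> topspace Pt \<longleftrightarrow> (\<forall>i. \<omega> i \<in> topspace X)"
  unfolding Pt_def by (simp add: PiE_iff)

lemma S_top: "S \<subseteq> topspace Pt" unfolding S_def by (rule closure_of_subset_topspace)

lemma topT: "topspace (Xf_top X f) = S"
  unfolding T_eq using S_top by auto

lemma Ob_top: "Ob \<subseteq> topspace Pt"
  unfolding Ob_def using rng by (auto simp: topPt intro!: subsetD[OF rng])

lemma Ob_S: "Ob \<subseteq> S" unfolding S_def by (rule closure_of_subset[OF Ob_top])

lemma orb_S: "(\<lambda>k. f (p + k)) \<in> S" using Ob_S unfolding Ob_def by auto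

lemma S_ne: "S \<noteq> {}" using orb_S by auto

lemma finite_closed: assumes "finite B" "B \<subseteq> topspace X" shows "closedin X B"
proof -
  have "B = \<Union>((\<lambda>b. {b}) ` B)" by auto
  moreover have "closedin X (\<Union>((\<lambda>b. {b}) ` B))"
    using assms by (intro closedin_Union) (auto intro: closedin_Hausdorff_singleton[OF hd])
  ultimately show ?thesis by simp
qed

lemma V_open: "openin X (V b)"
  unfolding V_def using rng fin by (intro openin_diff openin_topspace finite_closed) auto

lemma V_iff: "x \<in> range f \<Longrightarrow> x \<in> V b \<longleftrightarrow> x = b"
  unfolding V_def using rng by auto

lemma proj_open: "openin X W \<Longrightarrow> openin Pt {\<eta> \<in> topspace Pt. \<eta> i \<in> W}"
  unfolding Pt_def by (rule openin_continuous_map_preimage[OF continuous_map_product_projection]) auto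

lemma box_open:
  assumes "\<And>i. i < n \<Longrightarrow> openin X (W i)"
  shows "openin Pt {\<eta> \<in> topspace Pt. \<forall>i<n. \<eta> i \<in> W i}"
  using assms
proof (induction n)
  case 0 then show ?case by simp
next
  case (Suc n)
  have "{\<eta> \<in> topspace Pt. \<forall>i<Suc n. \<eta> i \<in> W i}
        = {\<eta> \<in> topspace Pt. \<forall>i<n. \<eta> i \<in> W i} \<inter> {\<eta> \<in> topspace Pt. \<eta> n \<in> W n}"
    by (auto simp: less_Suc_eq)
  moreover have "openin Pt {\<eta> \<in> topspace Pt. \<eta> n \<in> W n}" using Suc.prems by (intro proj_open) auto
  moreover have "openin Pt {\<eta> \<in> topspace Pt. \<forall>i<n. \<eta> i \<in> W i}"
    using Suc.IH Suc.prems by simp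
  ultimately show ?case by (simp only: openin_Int)
qed

lemma S_A: assumes "\<omega> \<in> S" shows "\<omega> i \<in> range f"
proof (rule ccontr)
  assume nA: "\<omega> i \<notin> range f"
  have om: "\<omega> \<in> topspace Pt" using assms S_top by blast
  hence omi: "\<omega> i \<in> topspace X" by (simp add: topPt)
  define N where "N = {\<eta> \<in> topspace Pt. \<eta> i \<in> topspace X - range f}"
  have cl: "closedin X (range f)" using rng fin by (intro finite_closed) auto
  have op: "openin Pt N" unfolding N_def
    by (rule proj_open, rule openin_diff[OF openin_topspace cl])
  have mem: "\<omega> \<in> N" unfolding N_def using om omi nA by blast
  have "\<forall>T. \<omega> \<in> T \<and> openin Pt T \<longrightarrow> (\<exists>y. y \<in> Ob \<and> y \<in> T)"
    using assms unfolding S_def in_closure_of by simp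
  hence "\<exists>y. y \<in> Ob \<and> y \<in> N" using mem op by blast
  then obtain y where y: "y \<in> Ob" "y \<in> N" by blast
  from y(1) obtain p where "y = (\<lambda>k. f (p + k))" unfolding Ob_def by blast
  hence "y i \<in> range f" by simp
  with y(2) show False unfolding N_def by blast
qed

lemma S_fac: assumes "\<omega> \<in> S" shows "map \<omega> [0..<n] \<in> fac f n"
proof -
  have om: "\<omega> \<in> topspace Pt" using assms S_top by blast
  hence omi: "\<And>i. \<omega> i \<in> topspace X" by (simp add: topPt)
  define N where "N = {\<eta> \<in> topspace Pt. \<forall>i<n. \<eta> i \<in> V (\<omega> i)}"
  have op: "openin Pt N" unfolding N_def by (intro box_open V_open)
  have "\<And>i. \<omega> i \<in> V (\<omega> i)" using V_iff[OF S_A[OF assms]] by blast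
  hence mem: "\<omega> \<in> N" unfolding N_def using om by blast
  have "\<forall>T. \<omega> \<in> T \<and> openin Pt T \<longrightarrow> (\<exists>y. y \<in> Ob \<and> y \<in> T)"
    using assms unfolding S_def in_closure_of by simp
  hence "\<exists>y. y \<in> Ob \<and> y \<in> N" using mem op by blast
  then obtain y where y: "y \<in> Ob" "y \<in> N" by blast
  from y(1) obtain p where yp: "y = (\<lambda>k. f (p + k))" unfolding Ob_def by blast
  have "f (p + i) = \<omega> i" if "i < n" for i
  proof -
    have "f (p + i) \<in> V (\<omega> i)" using y(2) that unfolding N_def yp by blast
    thus ?thesis using V_iff[of "f (p+i)"] by blast
  qed
  hence "map \<omega> [0..<n] = map (\<lambda>i. f (p + i)) [0..<n]" by simp
  thus ?thesis unfolding fac_def by blast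
qed

lemma shift_S: assumes "\<omega> \<in> S" shows "shift \<omega> \<in> S"
proof -
  have cm: "continuous_map Pt Pt shift"
    unfolding Pt_def shift_def continuous_map_componentwise_UNIV
    by (auto intro: continuous_map_product_projection)
  have "shift (\<lambda>k. f (n+k)) = (\<lambda>k. f (Suc n + k))" for n by (simp add: shift_def)
  hence "shift ` Ob \<subseteq> Ob" unfolding Ob_def by blast
  hence "Pt closure_of (shift ` Ob) \<subseteq> S" unfolding S_def by (rule closure_of_mono)
  moreover have "shift ` S \<subseteq> Pt closure_of (shift ` Ob)"
    unfolding S_def by (rule continuous_map_image_closure_subset[OF cm])
  ultimately show ?thesis using assms by auto
qed

lemma funpow_shift: "(shift ^^ i) \<omega> j = \<omega> (i + j)"
  by (induction i arbitrary: j) (auto simp: shift_def)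

lemma funpow_shift_S: "\<omega> \<in> S \<Longrightarrow> (shift ^^ i) \<omega> \<in> S"
  by (induction i) (auto intro: shift_S)

lemma cyl_open: "openin (Xf_top X f) {\<eta> \<in> S. \<forall>i<n. \<eta> i = a i}"
proof -
  have "{\<eta> \<in> S. \<forall>i<n. \<eta> i = a i} = {\<eta> \<in> topspace Pt. \<forall>i<n. \<eta> i \<in> V (a i)} \<inter> S"
  proof (intro equalityI subsetI)
    fix \<eta> assume "\<eta> \<in> {\<eta> \<in> S. \<forall>i<n. \<eta> i = a i}"
    hence "\<eta> \<in> S" "\<forall>i<n. \<eta> i = a i" by auto
    moreover have "\<forall>i<n. \<eta> i \<in> V (a i)"
      using \<open>\<forall>i<n. \<eta> i = a i\<close> V_iff[OF S_A[OF \<open>\<eta>\<in>S\<close>]] by blast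
    ultimately show "\<eta> \<in> {\<eta> \<in> topspace Pt. \<forall>i<n. \<eta> i \<in> V (a i)} \<inter> S"
      using S_top by blast
  next
    fix \<eta> assume "\<eta> \<in> {\<eta> \<in> topspace Pt. \<forall>i<n. \<eta> i \<in> V (a i)} \<inter> S"
    thus "\<eta> \<in> {\<eta> \<in> S. \<forall>i<n. \<eta> i = a i}" using V_iff[OF S_A] by auto
  qed
  moreover have "openin Pt {\<eta> \<in> topspace Pt. \<forall>i<n. \<eta> i \<in> V (a i)}" by (intro box_open V_open)
  ultimately show ?thesis unfolding T_eq openin_subtopology by blast
qed

lemma S_compact: "compactin Pt S"
proof -
  have "compact_space Pt" unfolding Pt_def by (simp add: compact_space_product_topology cpt)
  thus ?thesis unfolding S_def by (intro closedin_compact_space closedin_closure_of)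
qed

end


lemma cn_le: "W \<subseteq> U \<Longrightarrow> finite W \<Longrightarrow> \<Union>W = topspace T \<Longrightarrow> cover_number T U \<le> card W"
  unfolding cover_number_def by (rule cInf_lower) (auto intro: bdd_belowI[of _ 0])

lemma cn_attained:
  assumes "W0 \<subseteq> U" "finite W0" "\<Union>W0 = topspace T"
  shows "\<exists>W. W \<subseteq> U \<and> finite W \<and> \<Union>W = topspace T \<and> card W = cover_number T U"
proof -
  have "{card W | W. W \<subseteq> U \<and> finite W \<and> \<Union>W = topspace T} \<noteq> {}" using assms by blast
  from Inf_nat_def1[OF this] obtain W where
    "Inf {card W | W. W \<subseteq> U \<and> finite W \<and> \<Union>W = topspace T} = card W"
    "W \<subseteq> U" "finite W" "\<Union>W = topspace T" by blast
  thus ?thesis unfolding cover_number_def by metis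
qed

lemma cn_pos:
  assumes "W0 \<subseteq> U" "finite W0" "\<Union>W0 = topspace T" "topspace T \<noteq> {}"
  shows "cover_number T U \<ge> 1"
proof -
  obtain W where W: "W \<subseteq> U" "finite W" "\<Union>W = topspace T" "card W = cover_number T U"
    using cn_attained[OF assms(1-3)] by blast
  have "W \<noteq> {}" using W(3) assms(4) by (metis Union_empty)
  hence "card W \<ge> 1" using W(2) by (simp add: Suc_le_eq card_gt_0_iff)
  thus ?thesis using W(4) by simp
qed

context anq begin

lemma key:
  assumes U: "U \<in> open_covers (Xf_top X f)"
  shows "\<exists>k. \<forall>\<omega>\<in>S. \<exists>u\<in>U. {\<eta>\<in>S. \<forall>i<k. \<eta> i = \<omega> i} \<subseteq> u"
proof -
  have Uo: "\<And>u. u \<in> U \<Longrightarrow> openin (Xf_top X f) u" and Uc: "\<Union>U = S"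
    using U unfolding open_covers_def topT by auto
  have "\<exists>K. \<exists>u\<in>U. {\<eta>\<in>S. \<forall>i<K. \<eta> i = \<omega> i} \<subseteq> u" if om: "\<omega> \<in> S" for \<omega>
  proof -
    obtain u where u: "u \<in> U" "\<omega> \<in> u" using om Uc by blast
    obtain W where W: "openin Pt W" "u = W \<inter> S"
      using Uo[OF u(1)] unfolding T_eq openin_subtopology by blast
    have "\<omega> \<in> W" using u W by blast
    then obtain B where B: "finite {i \<in> UNIV. B i \<noteq> topspace X}" "\<forall>i\<in>UNIV. openin X (B i)"
       "\<omega> \<in> Pi\<^sub>E UNIV B" "Pi\<^sub>E UNIV B \<subseteq> W"
      using W(1) unfolding Pt_def openin_product_topology_alt by blast
    obtain K where K: "{i \<in> UNIV. B i \<noteq> topspace X} \<subseteq> {..<K}"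
      using B(1) finite_nat_iff_bounded by blast
    have "{\<eta>\<in>S. \<forall>i<K. \<eta> i = \<omega> i} \<subseteq> u"
    proof
      fix \<eta> assume "\<eta> \<in> {\<eta>\<in>S. \<forall>i<K. \<eta> i = \<omega> i}"
      hence e: "\<eta> \<in> S" "\<forall>i<K. \<eta> i = \<omega> i" by auto
      have "\<eta> i \<in> B i" for i
      proof (cases "B i = topspace X")
        case True
        have "\<eta> \<in> topspace Pt" using e S_top by blast
        thus ?thesis using True by (simp add: topPt)
      next
        case False
        hence "i < K" using K by blast
        thus ?thesis using e B(3) by (simp add: PiE_iff)
      qed
      hence "\<eta> \<in> Pi\<^sub>E UNIV B" by (simp add: PiE_iff)
      thus "\<eta> \<in> u" using B(4) W(2) e(1) by blast
    qed
    thus ?thesis using u(1) by blast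
  qed
  note loc = this
  have "\<forall>\<omega>\<in>S. \<exists>K. \<exists>u\<in>U. {\<eta>\<in>S. \<forall>i<K. \<eta> i = \<omega> i} \<subseteq> u"
    using loc by (intro ballI)
  from bchoice[OF this] obtain K where K: "\<forall>\<omega>\<in>S. \<exists>u\<in>U. {\<eta>\<in>S. \<forall>i<K \<omega>. \<eta> i = \<omega> i} \<subseteq> u"
    by (elim exE)
  define N where "N = (\<lambda>\<omega>. {\<eta> \<in> topspace Pt. \<forall>i<K \<omega>. \<eta> i \<in> V (\<omega> i)})"
  have Nopen: "openin Pt (N \<omega>)" for \<omega> unfolding N_def by (intro box_open V_open)
  have Nself: "\<omega> \<in> N \<omega>" if "\<omega> \<in> S" for \<omega>
  proof -
    have "\<omega> \<in> topspace Pt" using that S_top by (rule subsetD[rotated])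
    moreover have "\<forall>i<K \<omega>. \<omega> i \<in> V (\<omega> i)" using V_iff[OF S_A[OF that]] by simp
    ultimately show ?thesis unfolding N_def by (rule CollectI[of _ "\<omega>", OF conjI])
  qed
  have cov: "S \<subseteq> \<Union>(N ` S)"
  proof (rule subsetI)
    fix x assume x: "x \<in> S"
    show "x \<in> \<Union>(N ` S)" by (rule UnionI[OF imageI[of x S N, OF x] Nself[OF x]])
  qed
  have cc: "\<forall>\<U>. (\<forall>B\<in>\<U>. openin Pt B) \<and> S \<subseteq> \<Union>\<U> \<longrightarrow> (\<exists>F. finite F \<and> F \<subseteq> \<U> \<and> S \<subseteq> \<Union>F)"
    using S_compact unfolding compactin_def by (rule conjunct2)
  have "\<forall>B\<in>N ` S. openin Pt B" using Nopen by (intro ballI, elim imageE) simp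
  then have "\<exists>F. finite F \<and> F \<subseteq> N ` S \<and> S \<subseteq> \<Union>F" using cc cov by simp
  then obtain F where F: "finite F" "F \<subseteq> N ` S" "S \<subseteq> \<Union>F" by (elim exE conjE)
  obtain G where G: "G \<subseteq> S" "finite G" "F = N ` G" using finite_subset_image[OF F(1) F(2)] by (elim exE conjE)
  define k where "k = sum K G"
  have "\<forall>\<eta>\<in>S. \<exists>u\<in>U. {\<zeta>\<in>S. \<forall>i<k. \<zeta> i = \<eta> i} \<subseteq> u"
  proof
    fix \<eta> assume e: "\<eta> \<in> S"
    then have "\<eta> \<in> \<Union>(N ` G)" using F(3) G(3) by (simp only: subsetD)
    then obtain \<omega> where om: "\<omega> \<in> G" "\<eta> \<in> N \<omega>" by (elim UnionE imageE) simp
    have agree: "\<eta> i = \<omega> i" if "i < K \<omega>" for i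
    proof -
      have "\<eta> i \<in> V (\<omega> i)" using om(2) that unfolding N_def by simp
      thus ?thesis using V_iff[OF S_A[OF e]] by simp
    qed
    have Kk: "K \<omega> \<le> k" unfolding k_def using om(1) G(2) by (intro member_le_sum) auto
    have "\<omega> \<in> S" using om(1) G(1) by (rule subsetD[rotated])
    then obtain u where u: "u \<in> U" "{\<eta>\<in>S. \<forall>i<K \<omega>. \<eta> i = \<omega> i} \<subseteq> u" using bspec[OF K \<open>\<omega> \<in> S\<close>] by (elim bexE)
    have "{\<zeta>\<in>S. \<forall>i<k. \<zeta> i = \<eta> i} \<subseteq> {\<eta>\<in>S. \<forall>i<K \<omega>. \<eta> i = \<omega> i}"
    proof (rule subsetI)
      fix \<zeta> assume "\<zeta> \<in> {\<zeta>\<in>S. \<forall>i<k. \<zeta> i = \<eta> i}"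
      hence z: "\<zeta> \<in> S" "\<forall>i<k. \<zeta> i = \<eta> i" by simp_all
      have "\<forall>i<K \<omega>. \<zeta> i = \<omega> i"
      proof (intro allI impI)
        fix i assume "i < K \<omega>"
        hence "i < k" using Kk by simp
        thus "\<zeta> i = \<omega> i" using z(2) agree[OF \<open>i < K \<omega>\<close>] by simp
      qed
      thus "\<zeta> \<in> {\<eta>\<in>S. \<forall>i<K \<omega>. \<eta> i = \<omega> i}" using z(1) by simp
    qed
    thus "\<exists>u\<in>U. {\<zeta>\<in>S. \<forall>i<k. \<zeta> i = \<eta> i} \<subseteq> u" using u by (intro bexI[of _ u]) auto
  qed
  thus ?thesis by blast
qed

lemma key_word:
  assumes U: "U \<in> open_covers (Xf_top X f)"
  shows "\<exists>k ch. \<forall>v. ch v \<in> U \<and> (\<forall>\<eta>\<in>S. map \<eta> [0..<k] = v \<longrightarrow> \<eta> \<in> ch v)"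
proof -
  obtain k where k: "\<forall>\<omega>\<in>S. \<exists>u\<in>U. {\<eta>\<in>S. \<forall>i<k. \<eta> i = \<omega> i} \<subseteq> u" using key[OF U] by blast
  have Uc: "\<Union>U = S" using U unfolding open_covers_def topT by auto
  have "\<exists>u\<in>U. \<forall>\<eta>\<in>S. map \<eta> [0..<k] = v \<longrightarrow> \<eta> \<in> u" for v
  proof (cases "\<exists>\<eta>0\<in>S. map \<eta>0 [0..<k] = v")
    case True
    then obtain \<eta>0 where e0: "\<eta>0 \<in> S" "map \<eta>0 [0..<k] = v" by blast
    obtain u where u: "u \<in> U" "{\<eta>\<in>S. \<forall>i<k. \<eta> i = \<eta>0 i} \<subseteq> u" using k e0(1) by blast
    have "\<forall>\<eta>\<in>S. map \<eta> [0..<k] = v \<longrightarrow> \<eta> \<in> u"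
    proof (intro ballI impI)
      fix \<eta> assume "\<eta> \<in> S" "map \<eta> [0..<k] = v"
      hence "map \<eta> [0..<k] = map \<eta>0 [0..<k]" using e0 by simp
      hence "\<forall>i<k. \<eta> i = \<eta>0 i" by (simp add: map_eq_conv)
      thus "\<eta> \<in> u" using u \<open>\<eta> \<in> S\<close> by blast
    qed
    thus ?thesis using u by blast
  next
    case False
    have "U \<noteq> {}" using Uc S_ne by auto
    then obtain u where "u \<in> U" by blast
    thus ?thesis using False by blast
  qed
  hence "\<forall>v. \<exists>u. u \<in> U \<and> (\<forall>\<eta>\<in>S. map \<eta> [0..<k] = v \<longrightarrow> \<eta> \<in> u)" by blast
  from choice[OF this] obtain ch where "\<forall>v. ch v \<in> U \<and> (\<forall>\<eta>\<in>S. map \<eta> [0..<k] = v \<longrightarrow> \<eta> \<in> ch v)" by blast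
  thus ?thesis by blast
qed

end


context anq begin

lemma join_eq: "join_cover (Xf_top X f) shift U n = {S \<inter> (\<Inter>i<n. (shift^^i) -` c i) | c. \<forall>i<n. c i \<in> U}"
  unfolding join_cover_def topT by simp

lemma prefix_shift:
  assumes "i + k \<le> N"
  shows "map ((shift^^i) \<omega>) [0..<k] = take k (drop i (map \<omega> [0..<N]))"
proof -
  have "take k (drop i (map \<omega> [0..<N])) = map (\<lambda>j. \<omega> (i + j)) [0..<k]"
    by (rule take_drop_map_upt) (use assms in simp)
  thus ?thesis by (simp add: funpow_shift)
qed

lemma join_bound:
  assumes U: "U \<in> open_covers (Xf_top X f)"
  shows "\<exists>k. \<forall>n. (\<exists>W. W \<subseteq> join_cover (Xf_top X f) shift U n \<and> finite W \<and> \<Union>W = topspace (Xf_top X f))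
          \<and> cover_number (Xf_top X f) (join_cover (Xf_top X f) shift U n) \<le> card (fac f (n+k))"
proof -
  obtain k ch where ch: "\<And>v. ch v \<in> U" "\<And>v \<eta>. \<eta> \<in> S \<Longrightarrow> map \<eta> [0..<k] = v \<Longrightarrow> \<eta> \<in> ch v"
    using key_word[OF U] by blast
  have "(\<exists>W. W \<subseteq> join_cover (Xf_top X f) shift U n \<and> finite W \<and> \<Union>W = topspace (Xf_top X f))
          \<and> cover_number (Xf_top X f) (join_cover (Xf_top X f) shift U n) \<le> card (fac f (n+k))" for n
  proof -
    define E where "E = (\<lambda>w. S \<inter> (\<Inter>i<n. (shift^^i) -` (\<lambda>i. ch (take k (drop i w))) i))"
    define W where "W = E ` fac f (n+k)"
    have Wsub: "W \<subseteq> join_cover (Xf_top X f) shift U n"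
    proof
      fix e assume "e \<in> W"
      then obtain w where e: "e = E w" unfolding W_def by blast
      have "\<forall>i<n. (\<lambda>i. ch (take k (drop i w))) i \<in> U" using ch(1) by simp
      thus "e \<in> join_cover (Xf_top X f) shift U n" unfolding join_eq mem_Collect_eq
        by (intro exI[of _ "\<lambda>i. ch (take k (drop i w))"] conjI) (simp_all add: e E_def)
    qed
    have Wfin: "finite W" unfolding W_def by (intro finite_imageI fac_finite fin)
    have Wcov: "\<Union>W = S"
    proof
      show "\<Union>W \<subseteq> S" unfolding W_def E_def by blast
      show "S \<subseteq> \<Union>W"
      proof
        fix \<omega> assume om: "\<omega> \<in> S"
        define w where "w = map \<omega> [0..<n+k]"
        have wf: "w \<in> fac f (n+k)" unfolding w_def by (rule S_fac[OF om])
        have "(shift^^i) \<omega> \<in> ch (take k (drop i w))" if "i < n" for i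
        proof (rule ch(2))
          show "(shift^^i) \<omega> \<in> S" by (rule funpow_shift_S[OF om])
          show "map ((shift^^i) \<omega>) [0..<k] = take k (drop i w)"
            unfolding w_def by (rule prefix_shift) (use that in simp)
        qed
        hence "\<omega> \<in> E w" unfolding E_def using om by simp
        thus "\<omega> \<in> \<Union>W" unfolding W_def using wf by blast
      qed
    qed
    have "cover_number (Xf_top X f) (join_cover (Xf_top X f) shift U n) \<le> card W"
      by (rule cn_le[OF Wsub Wfin]) (simp add: Wcov topT)
    also have "\<dots> \<le> card (fac f (n+k))" unfolding W_def by (rule card_image_le[OF fac_finite[OF fin]])
    finally show ?thesis using Wsub Wfin Wcov topT by auto
  qed
  thus ?thesis by blast
qed

lemma join_pos:
  assumes U: "U \<in> open_covers (Xf_top X f)"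
  shows "cover_number (Xf_top X f) (join_cover (Xf_top X f) shift U n) \<ge> 1"
proof -
  from join_bound[OF U] obtain k where k: "\<forall>n. (\<exists>W. W \<subseteq> join_cover (Xf_top X f) shift U n \<and> finite W \<and> \<Union>W = topspace (Xf_top X f))
          \<and> cover_number (Xf_top X f) (join_cover (Xf_top X f) shift U n) \<le> card (fac f (n+k))"
    by (elim exE)
  from conjunct1[OF spec[OF k, of n]] obtain W where
    W: "W \<subseteq> join_cover (Xf_top X f) shift U n" "finite W" "\<Union>W = topspace (Xf_top X f)"
    by (elim exE conjE)
  have ne: "topspace (Xf_top X f) \<noteq> {}" unfolding topT by (rule S_ne)
  show ?thesis by (rule cn_pos[OF W ne])
qed

lemma join_sub:
  assumes U: "U \<in> open_covers (Xf_top X f)"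
  shows "cover_number (Xf_top X f) (join_cover (Xf_top X f) shift U (m+n))
    \<le> cover_number (Xf_top X f) (join_cover (Xf_top X f) shift U m) * cover_number (Xf_top X f) (join_cover (Xf_top X f) shift U n)"
proof -
  let ?T = "Xf_top X f"
  let ?J = "join_cover ?T shift U"
  from join_bound[OF U] obtain k where k: "\<forall>n. (\<exists>W. W \<subseteq> ?J n \<and> finite W \<and> \<Union>W = topspace ?T)
          \<and> cover_number ?T (?J n) \<le> card (fac f (n+k))"
    by (elim exE)
  have ex: "\<exists>W. W \<subseteq> ?J n \<and> finite W \<and> \<Union>W = topspace ?T" for n
    using conjunct1[OF spec[OF k, of n]] .
  obtain W1 where W1: "W1 \<subseteq> ?J m" "finite W1" "\<Union>W1 = topspace ?T" "card W1 = cover_number ?T (?J m)"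
    using ex[of m] by (elim exE conjE) (drule (2) cn_attained, elim exE conjE, blast)
  obtain W2 where W2: "W2 \<subseteq> ?J n" "finite W2" "\<Union>W2 = topspace ?T" "card W2 = cover_number ?T (?J n)"
    using ex[of n] by (elim exE conjE) (drule (2) cn_attained, elim exE conjE, blast)
  note W1(3)[unfolded topT] W2(3)[unfolded topT]
  note W1 = W1(1,2) this(1) W1(4) and W2 = W2(1,2) this(2) W2(4)
  define W where "W = (\<lambda>(a,b). a \<inter> (shift^^m) -` b) ` (W1 \<times> W2)"
  have Wsub: "W \<subseteq> ?J (m+n)"
  proof
    fix e assume "e \<in> W"
    then obtain a b where ab: "a \<in> W1" "b \<in> W2" "e = a \<inter> (shift^^m) -` b" unfolding W_def by blast
    obtain c where c: "a = S \<inter> (\<Inter>i<m. (shift^^i) -` c i)" "\<forall>i<m. c i \<in> U"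
      using ab(1) W1(1) unfolding join_eq by blast
    obtain d where d: "b = S \<inter> (\<Inter>i<n. (shift^^i) -` d i)" "\<forall>i<n. d i \<in> U"
      using ab(2) W2(1) unfolding join_eq by blast
    define g where "g = (\<lambda>i. if i < m then c i else d (i - m))"
    have gU: "\<forall>i<m+n. g i \<in> U" unfolding g_def using c(2) d(2) by auto
    have fp: "(shift^^i) ((shift^^m) \<omega>) = (shift^^(i+m)) \<omega>" for i \<omega>
      by (simp add: funpow_add)
    have eg: "e = S \<inter> (\<Inter>i<m+n. (shift^^i) -` g i)"
    proof (intro equalityI subsetI)
      fix \<omega> assume "\<omega> \<in> e"
      hence om: "\<omega> \<in> S" "\<forall>i<m. (shift^^i) \<omega> \<in> c i" "\<forall>i<n. (shift^^(i+m)) \<omega> \<in> d i"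
        unfolding ab(3) c(1) d(1) by (auto simp: fp)
      have "(shift^^i) \<omega> \<in> g i" if "i < m+n" for i
      proof (cases "i < m")
        case True thus ?thesis using om(2) unfolding g_def by simp
      next
        case False
        hence "i - m < n" "i - m + m = i" using that by auto
        thus ?thesis using om(3) False unfolding g_def by metis
      qed
      thus "\<omega> \<in> S \<inter> (\<Inter>i<m+n. (shift^^i) -` g i)" using om(1) by simp
    next
      fix \<omega> assume "\<omega> \<in> S \<inter> (\<Inter>i<m+n. (shift^^i) -` g i)"
      hence om: "\<omega> \<in> S" "\<forall>i<m+n. (shift^^i) \<omega> \<in> g i" by auto
      have 1: "\<forall>i<m. (shift^^i) \<omega> \<in> c i"
      proof (intro allI impI)
        fix i assume "i < m"
        hence "i < m + n" by simp
        hence "(shift^^i) \<omega> \<in> g i" using om(2) by blast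
        thus "(shift^^i) \<omega> \<in> c i" using \<open>i < m\<close> unfolding g_def by simp
      qed
      have 2: "(shift^^(i+m)) \<omega> \<in> d i" if "i < n" for i
      proof -
        have "i + m < m + n" using that by simp
        hence "(shift^^(i+m)) \<omega> \<in> g (i+m)" using om(2) by blast
        thus ?thesis unfolding g_def by simp
      qed
      have 3: "(shift^^m) \<omega> \<in> S" by (rule funpow_shift_S[OF om(1)])
      show "\<omega> \<in> e" unfolding ab(3) c(1) d(1) using om(1) 1 2 3 by (auto simp: fp)
    qed
    show "e \<in> ?J (m+n)" unfolding join_eq mem_Collect_eq
      by (intro exI[of _ g] conjI eg gU)
  qed
  have Wfin: "finite W" unfolding W_def using W1(2) W2(2) by simp
  have Wcov: "\<Union>W = topspace ?T"
  proof -
    have "\<Union>W \<subseteq> S" unfolding W_def using W1(3) by blast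
    moreover have "S \<subseteq> \<Union>W"
    proof
      fix \<omega> assume om: "\<omega> \<in> S"
      obtain a where a: "a \<in> W1" "\<omega> \<in> a" using om W1(3) by blast
      have "(shift^^m) \<omega> \<in> S" by (rule funpow_shift_S[OF om])
      then obtain b where b: "b \<in> W2" "(shift^^m) \<omega> \<in> b" using W2(3) by blast
      have "a \<inter> (shift^^m) -` b \<in> W" unfolding W_def using a(1) b(1) by force
      thus "\<omega> \<in> \<Union>W" using a(2) b(2) by blast
    qed
    ultimately show ?thesis using topT by simp
  qed
  have "cover_number ?T (?J (m+n)) \<le> card W" by (rule cn_le[OF Wsub Wfin Wcov])
  also have "\<dots> \<le> card (W1 \<times> W2)" unfolding W_def by (rule card_image_le) (simp add: W1(2) W2(2))
  also have "\<dots> = card W1 * card W2" by (rule card_cartesian_product)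
  finally show ?thesis using W1(4) W2(4) by simp
qed

end


context anq begin

lemma ent_lim:
  assumes U: "U \<in> open_covers (Xf_top X f)"
  shows "(\<lambda>n. ln (real (cover_number (Xf_top X f) (join_cover (Xf_top X f) shift U n))) / real n)
          \<longlonglongrightarrow> entropy_cover (Xf_top X f) shift U"
proof -
  let ?a = "\<lambda>n. ln (real (cover_number (Xf_top X f) (join_cover (Xf_top X f) shift U n)))"
  have pos: "\<And>n. real (cover_number (Xf_top X f) (join_cover (Xf_top X f) shift U n)) \<ge> 1"
    using join_pos[OF U] by simp
  have conv: "(\<lambda>n. ?a n / real n) \<longlonglongrightarrow> (INF n\<in>{1..}. ?a n / real n)"
  proof (rule fekete)
    fix m n
    have "?a (m+n) \<le> ln (real (cover_number (Xf_top X f) (join_cover (Xf_top X f) shift U m)) *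
                         real (cover_number (Xf_top X f) (join_cover (Xf_top X f) shift U n)))"
    proof (subst ln_le_cancel_iff)
      show "0 < real (cover_number (Xf_top X f) (join_cover (Xf_top X f) shift U (m + n)))"
        using pos[of "m+n"] by simp
      show "0 < real (cover_number (Xf_top X f) (join_cover (Xf_top X f) shift U m)) *
                         real (cover_number (Xf_top X f) (join_cover (Xf_top X f) shift U n))"
        using pos[of m] pos[of n] by simp
      show "real (cover_number (Xf_top X f) (join_cover (Xf_top X f) shift U (m + n)))
         \<le> real (cover_number (Xf_top X f) (join_cover (Xf_top X f) shift U m)) *
           real (cover_number (Xf_top X f) (join_cover (Xf_top X f) shift U n))"
        using join_sub[OF U, of m n] by (simp only: of_nat_mult[symmetric] of_nat_le_iff)
    qed
    also have "\<dots> = ?a m + ?a n" using pos[of m] pos[of n] by (simp add: ln_mult)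
    finally show "?a (m+n) \<le> ?a m + ?a n" .
  next
    fix n show "0 \<le> ?a n" using pos[of n] by simp
  qed
  have "entropy_cover (Xf_top X f) shift U = (INF n\<in>{1..}. ?a n / real n)"
    unfolding entropy_cover_def by (rule limI[OF conv])
  thus ?thesis using conv by simp
qed

lemma aux_div: "(a::real) \<noteq> 0 \<Longrightarrow> x / a * (a / b) = x / b"
  by (cases "b = 0") (simp_all add: field_simps)

lemma fac_shift_lim: "(\<lambda>n. ln (real (card (fac f (n+k)))) / real n) \<longlonglongrightarrow> hF f"
proof -
  have a: "(\<lambda>n. ln (real (card (fac f (n+k)))) / real (n+k)) \<longlonglongrightarrow> hF f"
    using LIMSEQ_ignore_initial_segment[OF fac_lim[OF fin], of k] by simp
  have b0: "(\<lambda>n. 1 + real k / real n) \<longlonglongrightarrow> 1 + 0"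
    by (intro tendsto_add tendsto_const tendsto_divide_0[OF tendsto_const]
        filterlim_at_top_imp_at_infinity filterlim_real_sequentially)
  have b: "(\<lambda>n. real (n+k) / real n) \<longlonglongrightarrow> 1"
  proof (rule Lim_transform_eventually[OF b0[simplified]])
    show "\<forall>\<^sub>F n in sequentially. 1 + real k / real n = real (n + k) / real n"
      using eventually_ge_at_top[of 1] by eventually_elim (simp add: field_simps)
  qed
  have "(\<lambda>n. ln (real (card (fac f (n+k)))) / real (n+k) * (real (n+k) / real n)) \<longlonglongrightarrow> hF f * 1"
    by (rule tendsto_mult[OF a b])
  hence c: "(\<lambda>n. ln (real (card (fac f (n+k)))) / real (n+k) * (real (n+k) / real n)) \<longlonglongrightarrow> hF f" by simp
  show ?thesis
  proof (rule Lim_transform_eventually[OF c])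
    show "\<forall>\<^sub>F n in sequentially. ln (real (card (fac f (n+k)))) / real (n+k) * (real (n+k) / real n)
        = ln (real (card (fac f (n+k)))) / real n"
      using eventually_ge_at_top[of 1] by eventually_elim (rule aux_div, simp)
  qed
qed

lemma ent_le:
  assumes U: "U \<in> open_covers (Xf_top X f)"
  shows "entropy_cover (Xf_top X f) shift U \<le> hF f"
proof -
  from join_bound[OF U] obtain k where k: "\<forall>n. (\<exists>W. W \<subseteq> join_cover (Xf_top X f) shift U n \<and> finite W \<and> \<Union>W = topspace (Xf_top X f))
          \<and> cover_number (Xf_top X f) (join_cover (Xf_top X f) shift U n) \<le> card (fac f (n+k))"
    by (elim exE)
  show ?thesis
  proof (rule tendsto_le[OF _ fac_shift_lim[of k] ent_lim[OF U]])
    show "\<forall>\<^sub>F n in sequentially. ln (real (cover_number (Xf_top X f) (join_cover (Xf_top X f) shift U n))) / real n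
          \<le> ln (real (card (fac f (n+k)))) / real n"
    proof (rule always_eventually, rule allI)
      fix n
      have le: "cover_number (Xf_top X f) (join_cover (Xf_top X f) shift U n) \<le> card (fac f (n+k))"
        using conjunct2[OF spec[OF k, of n]] .
      have "ln (real (cover_number (Xf_top X f) (join_cover (Xf_top X f) shift U n))) \<le> ln (real (card (fac f (n+k))))"
        using le join_pos[OF U, of n] by (subst ln_le_cancel_iff) auto
      thus "ln (real (cover_number (Xf_top X f) (join_cover (Xf_top X f) shift U n))) / real n
          \<le> ln (real (card (fac f (n+k)))) / real n" by (rule divide_right_mono) simp
    qed
  qed simp
qed

definition U0 :: "(nat \<Rightarrow> 'a) set set" where "U0 = (\<lambda>a. {\<eta>\<in>S. \<eta> 0 = a}) ` UNIV"

lemma U0_cover: "U0 \<in> open_covers (Xf_top X f)"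
proof -
  have "openin (Xf_top X f) {\<eta>\<in>S. \<eta> 0 = a}" for a
  proof -
    have "{\<eta>\<in>S. \<forall>i<1. \<eta> i = (\<lambda>_. a) i} = {\<eta>\<in>S. \<eta> 0 = a}" by auto
    thus ?thesis using cyl_open[of 1 "\<lambda>_. a"] by simp
  qed
  moreover have "\<Union>U0 = S" unfolding U0_def by auto
  ultimately show ?thesis unfolding open_covers_def U0_def topT by auto
qed

lemma U0_agree:
  assumes e: "e \<in> join_cover (Xf_top X f) shift U0 n" and om: "\<omega> \<in> e" "\<omega>' \<in> e" and i: "i < n"
  shows "\<omega> i = \<omega>' i"
proof -
  obtain c where c: "e = S \<inter> (\<Inter>i<n. (shift^^i) -` c i)" "\<forall>i<n. c i \<in> U0"
    using e unfolding join_eq by blast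
  obtain a where a: "c i = {\<eta>\<in>S. \<eta> 0 = a}" using c(2) i unfolding U0_def by blast
  have "(shift^^i) \<omega> \<in> c i" "(shift^^i) \<omega>' \<in> c i" using om i unfolding c(1) by auto
  hence "(shift^^i) \<omega> 0 = a" "(shift^^i) \<omega>' 0 = a" unfolding a by auto
  thus ?thesis by (simp add: funpow_shift)
qed

lemma U0_ge: "card (fac f n) \<le> cover_number (Xf_top X f) (join_cover (Xf_top X f) shift U0 n)"
proof -
  let ?J = "join_cover (Xf_top X f) shift U0 n"
  from join_bound[OF U0_cover] obtain k where k: "\<forall>n. (\<exists>W. W \<subseteq> join_cover (Xf_top X f) shift U0 n \<and> finite W \<and> \<Union>W = topspace (Xf_top X f))
          \<and> cover_number (Xf_top X f) (join_cover (Xf_top X f) shift U0 n) \<le> card (fac f (n+k))"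
    by (elim exE)
  obtain W where W: "W \<subseteq> ?J" "finite W" "\<Union>W = topspace (Xf_top X f)" "card W = cover_number (Xf_top X f) ?J"
    using conjunct1[OF spec[OF k, of n]] by (elim exE conjE) (drule (2) cn_attained, elim exE conjE, blast)
  have WS: "\<Union>W = S" using W(3) topT by simp
  have exom: "\<exists>\<omega>. \<omega> \<in> S \<and> map \<omega> [0..<n] = w" if wf: "w \<in> fac f n" for w
  proof -
    obtain p where "w = map (\<lambda>i. f (p + i)) [0..<n]" using wf unfolding fac_def by blast
    thus ?thesis using orb_S[of p] by blast
  qed
  define om where "om = (\<lambda>w. SOME \<omega>. \<omega> \<in> S \<and> map \<omega> [0..<n] = w)"
  have om: "om w \<in> S" "map (om w) [0..<n] = w" if "w \<in> fac f n" for w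
    using someI_ex[OF exom[OF that]] unfolding om_def by auto
  have exel: "\<exists>e. e \<in> W \<and> om w \<in> e" if "w \<in> fac f n" for w
    using om(1)[OF that] WS by blast
  define el where "el = (\<lambda>w. SOME e. e \<in> W \<and> om w \<in> e)"
  have el: "el w \<in> W" "om w \<in> el w" if "w \<in> fac f n" for w
    using someI_ex[OF exel[OF that]] unfolding el_def by auto
  have "inj_on el (fac f n)"
  proof (rule inj_onI)
    fix w w' assume w: "w \<in> fac f n" and w': "w' \<in> fac f n" and eq: "el w = el w'"
    have "el w \<in> ?J" using el(1)[OF w] W(1) by blast
    have "\<forall>i<n. om w i = om w' i"
      using U0_agree[OF \<open>el w \<in> ?J\<close> el(2)[OF w]] el(2)[OF w'] eq by simp
    hence "map (om w) [0..<n] = map (om w') [0..<n]" by simp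
    thus "w = w'" using om(2)[OF w] om(2)[OF w'] by simp
  qed
  moreover have "el ` fac f n \<subseteq> W" using el(1) by blast
  ultimately have "card (fac f n) \<le> card W" by (rule card_inj_on_le[OF _ _ W(2)])
  thus ?thesis using W(4) by simp
qed

lemma ent_U0: "hF f \<le> entropy_cover (Xf_top X f) shift U0"
proof (rule tendsto_le[OF _ ent_lim[OF U0_cover] fac_lim[OF fin]])
  show "\<forall>\<^sub>F n in sequentially. ln (real (card (fac f n))) / real n
        \<le> ln (real (cover_number (Xf_top X f) (join_cover (Xf_top X f) shift U0 n))) / real n"
  proof (rule always_eventually, rule allI)
    fix n
    have "ln (real (card (fac f n))) \<le> ln (real (cover_number (Xf_top X f) (join_cover (Xf_top X f) shift U0 n)))"
      using U0_ge[of n] fac_card_pos[OF fin, of n] by (subst ln_le_cancel_iff) auto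
    thus "ln (real (card (fac f n))) / real n
        \<le> ln (real (cover_number (Xf_top X f) (join_cover (Xf_top X f) shift U0 n))) / real n"
      by (rule divide_right_mono) simp
  qed
qed simp

lemma anqie_eq: "anqie_entropy X f = ereal (hF f)"
proof -
  have "anqie_entropy X f = (SUP U \<in> open_covers (Xf_top X f). ereal (entropy_cover (Xf_top X f) shift U))"
    unfolding anqie_entropy_def top_entropy_def ..
  also have "\<dots> = ereal (hF f)"
  proof (rule antisym)
    show "(SUP U \<in> open_covers (Xf_top X f). ereal (entropy_cover (Xf_top X f) shift U)) \<le> ereal (hF f)"
      by (rule SUP_least) (simp add: ent_le)
    show "ereal (hF f) \<le> (SUP U \<in> open_covers (Xf_top X f). ereal (entropy_cover (Xf_top X f) shift U))"
      by (rule SUP_upper2[OF U0_cover]) (simp add: ent_U0)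
  qed
  finally show ?thesis .
qed

end

theorem lemma6p2:
  fixes X :: "'a topology" and f :: "nat \<Rightarrow> 'a"
  assumes "compact_space X" and "Hausdorff_space X"
    and "range f \<subseteq> topspace X" and "finite (range f)"
  shows "\<exists>L. (\<lambda>m. ln (real (card (R_blocks f m))) / real m) \<longlonglongrightarrow> L
             \<and> anqie_entropy X f = ereal L"
proof -
  interpret anq X f using assms by unfold_locales
  show ?thesis using R_lim[OF fin] anqie_eq by blast
qed


end
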